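(* In the Part I procedure, let $xy$ be an edge processed in a bridge step of phase $\Delta$ whose skewness $|\mathrm{lcp}(x)-\mathrm{lcp}(y)|$ is neither $0$ nor $2$, and let $z$ be a vertex that becomes even in this bridge step. Then $\mathrm{lcp}(z)>\max(\mathrm{lcp}(x),\mathrm{lcp}(y))$. Consequently, any bridge of phase $\Delta$ having $z$ as an endpoint has skewness larger than that of $xy$.
   Context: Let $G=(V,E)$ be a finite undirected graph and $M$ a matching in $G$; free vertices and $\mathit{mate}(v)$ are as usual. The Part I procedure maintains a search structure $S$: a forest whose nodes are either single (odd) vertices or blossoms (disjoint vertex sets with a distinguished base vertex), each tree rooted at a blossom containing a free vertex. Vertices in $S$ are labelled even (those in blossoms) or odd; vertices not in $S$ are unlabelled. A vertex is born even/odd according to the label it receives when inserted. The procedure maintains $\mathrm{lcp}(v)$ for even vertices and $\mathrm{lcp}_{\mathrm{odd}}(v)$ for vertices born odd. The blossom nodes currently in $S$ are the maximal blossoms. Phase $0$: every free vertex $v$ becomes the root of its own tree as a trivial blossom $\{v\}$ with base $v$, even, $\mathrm{lcp}(v)=0$. For $\Delta=1,2,\dots$, phase $\Delta$ does: (i) if $\Delta$ is even, growth steps: while some even vertex $v$ with $\mathrm{lcp}(v)=\Delta-2$ has a neighbour $x$ not in $S$, add $x$ as an odd child of the blossom containing $v$ with $\mathrm{lcp}_{\mathrm{odd}}(x)=\Delta-1$, and $\mathit{mate}(x)$ as a child of $x$, as a trivial even blossom with $\mathrm{lcp}(\mathit{mate}(x))=\Delta$; (ii) bridge steps: while there is a non-matching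 edge $xy$ with $x,y$ even, in different maximal blossoms $B_x,B_y$, and $\mathrm{lcp}(x)+\mathrm{lcp}(y)=2\Delta-2$: if $B_x,B_y$ lie in different trees the procedure stops; otherwise let $B$ be the lowest common ancestor of $B_x,B_y$; every odd vertex $z$ on the tree paths from $B_x$ and $B_y$ to $B$ becomes even with $\mathrm{lcp}(z)=\mathrm{lcp}(x)+1+\mathrm{lcp}(y)-\mathrm{lcp}_{\mathrm{odd}}(z)$, and $B$ together with all blossoms and odd vertices on both paths is merged into one new blossom with base equal to the base of $B$, replacing $B$ in the tree. The skewness of an edge $xy$ with both endpoints even is $|\mathrm{lcp}(x)-\mathrm{lcp}(y)|$. *)

theory Defs
  imports Main
begin

(* Nodes of the search structure S: blossoms (vertex sets) or single odd vertices *)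
datatype 'a node = Bn "'a set" | On 'a

datatype stage = Growth | Bridges | Stopped

record 'a st =
  nodes :: "'a node set"
  par   :: "'a node \<Rightarrow> 'a node option"
  base  :: "'a set \<Rightarrow> 'a"
  lcp   :: "'a \<Rightarrow> int"                 (* lcp(v), meaningful for even v *)
  lcpo  :: "'a \<Rightarrow> int"                 (* lcp_odd(v), meaningful for vertices born odd *)
  delta :: nat
  stage :: stage

definition graph_matching :: "'a set \<Rightarrow> 'a set set \<Rightarrow> 'a set set \<Rightarrow> bool" where
  "graph_matching V E M \<longleftrightarrow> finite V \<and>
     E \<subseteq> {{u, v} | u v. u \<noteq> v \<and> u \<in> V \<and> v \<in> V} \<and>
     M \<subseteq> E \<and> (\<forall>e1\<in>M. \<forall>e2\<in>M. e1 \<noteq> e2 \<longrightarrow> e1 \<inter> e2 = {})"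

definition free_vertex :: "'a set \<Rightarrow> 'a set set \<Rightarrow> 'a \<Rightarrow> bool" where
  "free_vertex V M v \<longleftrightarrow> v \<in> V \<and> (\<forall>e\<in>M. v \<notin> e)"

definition mate :: "'a set set \<Rightarrow> 'a \<Rightarrow> 'a" where
  "mate M x = (THE y. {x, y} \<in> M)"

definition blossoms :: "('a, 'b) st_scheme \<Rightarrow> 'a set set" where
  "blossoms s = {b. Bn b \<in> nodes s}"

definition evens :: "('a, 'b) st_scheme \<Rightarrow> 'a set" where
  "evens s = \<Union> (blossoms s)"

definition odds :: "('a, 'b) st_scheme \<Rightarrow> 'a set" where
  "odds s = {v. On v \<in> nodes s}"

definition inS :: "('a, 'b) st_scheme \<Rightarrow> 'a \<Rightarrow> bool" where
  "inS s v \<longleftrightarrow> v \<in> evens s \<or> v \<in> odds s"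

definition blossom_of :: "('a, 'b) st_scheme \<Rightarrow> 'a \<Rightarrow> 'a set" where
  "blossom_of s v = (THE b. b \<in> blossoms s \<and> v \<in> b)"

definition anc :: "('a, 'b) st_scheme \<Rightarrow> 'a node \<Rightarrow> 'a node \<Rightarrow> bool" where
  "anc s n m \<longleftrightarrow> (n, m) \<in> {(a, c). par s a = Some c}\<^sup>*"

definition is_lca :: "('a, 'b) st_scheme \<Rightarrow> 'a node \<Rightarrow> 'a node \<Rightarrow> 'a node \<Rightarrow> bool" where
  "is_lca s n1 n2 c \<longleftrightarrow> anc s n1 c \<and> anc s n2 c \<and>
     (\<forall>d. anc s n1 d \<and> anc s n2 d \<longrightarrow> anc s c d)"

definition init_st :: "'a set \<Rightarrow> 'a set set \<Rightarrow> 'a st" where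
  "init_st V M = \<lparr> nodes = {Bn {v} | v. free_vertex V M v}, par = (\<lambda>_. None),
     base = (\<lambda>b. the_elem b), lcp = (\<lambda>_. 0), lcpo = (\<lambda>_. 0), delta = 0, stage = Bridges \<rparr>"

definition growth_possible :: "'a set set \<Rightarrow> 'a st \<Rightarrow> bool" where
  "growth_possible E s \<longleftrightarrow> (\<exists>v x b. Bn b \<in> nodes s \<and> v \<in> b \<and> lcp s v + 2 = int (delta s)
      \<and> {v, x} \<in> E \<and> \<not> inS s x)"

definition grow_step :: "'a set set \<Rightarrow> 'a set set \<Rightarrow> 'a st \<Rightarrow> 'a st \<Rightarrow> bool" where
  "grow_step E M s s' \<longleftrightarrow> stage s = Growth \<and> even (delta s) \<and>
     (\<exists>v x b. Bn b \<in> nodes s \<and> v \<in> b \<and> lcp s v + 2 = int (delta s)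
      \<and> {v, x} \<in> E \<and> \<not> inS s x \<and>
      s' = s \<lparr> nodes := nodes s \<union> {On x, Bn {mate M x}},
               par := (par s)(On x := Some (Bn b), Bn {mate M x} := Some (On x)),
               base := (base s)({mate M x} := mate M x),
               lcp := (lcp s)(mate M x := int (delta s)),
               lcpo := (lcpo s)(x := int (delta s) - 1) \<rparr>)"

definition end_growth :: "'a set set \<Rightarrow> 'a st \<Rightarrow> 'a st \<Rightarrow> bool" where
  "end_growth E s s' \<longleftrightarrow> stage s = Growth \<and> (odd (delta s) \<or> \<not> growth_possible E s) \<and>
     s' = s \<lparr> stage := Bridges \<rparr>"

definition bridge_cond :: "'a set set \<Rightarrow> 'a set set \<Rightarrow> 'a st \<Rightarrow> 'a \<Rightarrow> 'a \<Rightarrow> bool" where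
  "bridge_cond E M s x y \<longleftrightarrow> {x, y} \<in> E \<and> {x, y} \<notin> M \<and> x \<in> evens s \<and> y \<in> evens s \<and>
     blossom_of s x \<noteq> blossom_of s y \<and> lcp s x + lcp s y = 2 * int (delta s) - 2"

definition stop_step :: "'a set set \<Rightarrow> 'a set set \<Rightarrow> 'a st \<Rightarrow> 'a \<Rightarrow> 'a \<Rightarrow> 'a st \<Rightarrow> bool" where
  "stop_step E M s x y s' \<longleftrightarrow> stage s = Bridges \<and> bridge_cond E M s x y \<and>
     \<not> (\<exists>c. anc s (Bn (blossom_of s x)) c \<and> anc s (Bn (blossom_of s y)) c) \<and>
     s' = s \<lparr> stage := Stopped \<rparr>"

definition bridge_step :: "'a set set \<Rightarrow> 'a set set \<Rightarrow> 'a st \<Rightarrow> 'a \<Rightarrow> 'a \<Rightarrow> 'a st \<Rightarrow> bool" where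
  "bridge_step E M s x y s' \<longleftrightarrow> stage s = Bridges \<and> bridge_cond E M s x y \<and>
     (\<exists>b. is_lca s (Bn (blossom_of s x)) (Bn (blossom_of s y)) (Bn b) \<and>
       (let Bx = Bn (blossom_of s x); By = Bn (blossom_of s y);
            P = {n. (anc s Bx n \<or> anc s By n) \<and> anc s n (Bn b)};
            Z = {z. On z \<in> P};
            NB = \<Union> {c. Bn c \<in> P} \<union> Z
        in s' = s \<lparr> nodes := (nodes s - P) \<union> {Bn NB},
                    par := (\<lambda>n. if n = Bn NB then par s (Bn b)
                                 else if n \<in> P then None
                                 else (case par s n of None \<Rightarrow> None
                                       | Some p \<Rightarrow> if p \<in> P then Some (Bn NB) else Some p)),
                    base := (base s)(NB := base s b),
                    lcp := (\<lambda>v. if v \<in> Z then lcp s x + 1 + lcp s y - lcpo s v else lcp s v) \<rparr>))"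

definition end_phase :: "'a set set \<Rightarrow> 'a set set \<Rightarrow> 'a st \<Rightarrow> 'a st \<Rightarrow> bool" where
  "end_phase E M s s' \<longleftrightarrow> stage s = Bridges \<and> \<not> (\<exists>x y. bridge_cond E M s x y) \<and>
     s' = s \<lparr> delta := Suc (delta s), stage := Growth \<rparr>"

definition step :: "'a set set \<Rightarrow> 'a set set \<Rightarrow> 'a st \<Rightarrow> 'a st \<Rightarrow> bool" where
  "step E M s s' \<longleftrightarrow> grow_step E M s s' \<or> end_growth E s s' \<or>
     (\<exists>x y. bridge_step E M s x y s') \<or> (\<exists>x y. stop_step E M s x y s') \<or> end_phase E M s s'"

definition reachable :: "'a set \<Rightarrow> 'a set set \<Rightarrow> 'a set set \<Rightarrow> 'a st \<Rightarrow> bool" where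
  "reachable V E M s \<longleftrightarrow> (step E M)\<^sup>*\<^sup>* (init_st V M) s"

definition step_in_phase :: "'a set set \<Rightarrow> 'a set set \<Rightarrow> nat \<Rightarrow> 'a st \<Rightarrow> 'a st \<Rightarrow> bool" where
  "step_in_phase E M d s s' \<longleftrightarrow> step E M s s' \<and> delta s' = d"

end

theory Submission
  imports Defs
begin

definition verts :: "'a node \<Rightarrow> 'a set" where
  "verts n = (case n of Bn b \<Rightarrow> b | On v \<Rightarrow> {v})"

definition I_par :: "'a st \<Rightarrow> bool" where
  "I_par s \<longleftrightarrow> (\<forall>n p. par s n = Some p \<longrightarrow> n \<in> nodes s \<and> p \<in> nodes s)"
definition I_rank :: "'a st \<Rightarrow> bool" where
  "I_rank s \<longleftrightarrow> (\<exists>rk::'a node \<Rightarrow> nat. \<forall>n p. par s n = Some p \<longrightarrow> rk p < rk n)"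
definition I_disj :: "'a st \<Rightarrow> bool" where
  "I_disj s \<longleftrightarrow> (\<forall>b1\<in>blossoms s. \<forall>b2\<in>blossoms s. b1 \<noteq> b2 \<longrightarrow> b1 \<inter> b2 = {}) \<and>
     (\<forall>b\<in>blossoms s. b \<noteq> {}) \<and> evens s \<inter> odds s = {}"
definition I_S :: "'a set \<Rightarrow> 'a set set \<Rightarrow> 'a st \<Rightarrow> bool" where
  "I_S V M s \<longleftrightarrow> (\<forall>v. free_vertex V M v \<longrightarrow> inS s v) \<and> (\<forall>u w. inS s u \<longrightarrow> {u,w} \<in> M \<longrightarrow> inS s w)"
definition I_num :: "'a st \<Rightarrow> ('a \<Rightarrow> int) \<Rightarrow> bool" where
  "I_num s ins \<longleftrightarrow> (\<forall>z\<in>odds s. ins z = lcpo s z + 1 \<and> odd (lcpo s z)) \<and>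
     (\<forall>y\<in>evens s. ins y \<le> lcp s y \<and> even (lcp s y)) \<and> (\<forall>u. inS s u \<longrightarrow> ins u \<le> int (delta s))"
definition I_anc :: "'a st \<Rightarrow> ('a \<Rightarrow> int) \<Rightarrow> bool" where
  "I_anc s ins \<longleftrightarrow> (\<forall>n z u. n \<in> nodes s \<longrightarrow> anc s n (On z) \<longrightarrow> n \<noteq> On z \<longrightarrow> u \<in> verts n \<longrightarrow>
      ins z \<le> ins u \<and> (ins z = ins u \<longrightarrow> u \<in> evens s \<and> lcp s u = ins u))"
definition I_edge :: "'a set set \<Rightarrow> 'a st \<Rightarrow> ('a \<Rightarrow> int) \<Rightarrow> bool" where
  "I_edge E s ins \<longleftrightarrow> (\<forall>y x. y \<in> evens s \<longrightarrow> {y,x} \<in> E \<longrightarrow>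
      (lcp s y + 2 < int (delta s) \<or> (lcp s y + 2 = int (delta s) \<and> stage s \<noteq> Growth)) \<longrightarrow>
      inS s x \<and> ins x \<le> lcp s y + 2)"
definition good :: "'a set \<Rightarrow> 'a set set \<Rightarrow> 'a set set \<Rightarrow> 'a st \<Rightarrow> ('a \<Rightarrow> int) \<Rightarrow> bool" where
  "good V E M s ins \<longleftrightarrow> I_par s \<and> I_rank s \<and> I_disj s \<and> I_S V M s \<and> I_num s ins \<and> I_anc s ins \<and> I_edge E s ins"

lemma anc_nodes:
  assumes "I_par s" "anc s n m" "n \<in> nodes s" shows "m \<in> nodes s"
  using assms(2,3) unfolding anc_def
proof (induction rule: rtrancl_induct)
  case base then show ?case .
next
  case (step y z) then show ?case using assms(1) unfolding I_par_def by auto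
qed

lemma anc_trans: "anc s a b \<Longrightarrow> anc s b c \<Longrightarrow> anc s a c"
  unfolding anc_def by (meson rtrancl_trans)

lemma anc_refl: "anc s a a" unfolding anc_def by simp

lemma anc_step: "par s a = Some c \<Longrightarrow> anc s a c" unfolding anc_def by auto

lemma anc_rank:
  assumes "\<forall>n p. par s n = Some p \<longrightarrow> rk p < (rk::'a node \<Rightarrow> nat) n" "anc s n m" shows "rk m \<le> rk n"
  using assms(2) unfolding anc_def
proof (induction rule: rtrancl_induct)
  case base then show ?case by simp
next
  case (step y z)
  then have "rk z < rk y" using assms(1) by auto
  then show ?case using step.IH by simp
qed

lemma blossom_of_in:
  assumes "I_disj s" "x \<in> evens s"
  shows "blossom_of s x \<in> blossoms s \<and> x \<in> blossom_of s x"
proof -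
  obtain b where b: "b \<in> blossoms s" "x \<in> b" using assms(2) unfolding evens_def by auto
  have D: "\<forall>b1\<in>blossoms s. \<forall>b2\<in>blossoms s. b1 \<noteq> b2 \<longrightarrow> b1 \<inter> b2 = {}"
    using assms(1) unfolding I_disj_def by simp
  have "\<And>c. c \<in> blossoms s \<and> x \<in> c \<Longrightarrow> c = b"
  proof -
    fix c assume c: "c \<in> blossoms s \<and> x \<in> c"
    show "c = b"
    proof (rule ccontr)
      assume "c \<noteq> b"
      then have "c \<inter> b = {}" using D c b(1) by blast
      then show False using c b(2) by blast
    qed
  qed
  then have "blossom_of s x = b" unfolding blossom_of_def using b by (intro the_equality) blast+
  then show ?thesis using b by simp
qed

lemma blossoms_in_nodes: "b \<in> blossoms s \<longleftrightarrow> Bn b \<in> nodes s" unfolding blossoms_def by simp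

lemma mate_facts:
  assumes gm: "graph_matching V E M" and IS: "I_S V M s" and e: "{v,x} \<in> E" and nx: "\<not> inS s x"
  shows "{x, mate M x} \<in> M \<and> mate M x \<noteq> x \<and> \<not> inS s (mate M x)"
proof -
  have Esub: "E \<subseteq> {{u, v} | u v. u \<noteq> v \<and> u \<in> V \<and> v \<in> V}" and MsubE: "M \<subseteq> E"
    and Mdisj: "\<forall>e1\<in>M. \<forall>e2\<in>M. e1 \<noteq> e2 \<longrightarrow> e1 \<inter> e2 = {}"
    using gm unfolding graph_matching_def by auto
  obtain u0 w0 where uw0: "{v,x} = {u0,w0}" "u0 \<in> V" "w0 \<in> V" using Esub e by blast
  have "x \<in> {u0,w0}" using uw0(1) by (metis insertCI)
  then have xV: "x \<in> V" using uw0 by blast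
  have "\<not> free_vertex V M x" using IS nx unfolding I_S_def by blast
  then obtain e0 where e0: "e0 \<in> M" "x \<in> e0" using xV unfolding free_vertex_def by blast
  have "e0 \<in> E" using MsubE e0(1) by blast
  then have "e0 \<in> {{u, v} | u v. u \<noteq> v \<and> u \<in> V \<and> v \<in> V}" using Esub by blast
  then obtain u w where uw: "e0 = {u,w}" "u \<noteq> w" by blast
  obtain w' where w': "e0 = {x,w'}" "w' \<noteq> x"
  proof (cases "x = u")
    case True then show ?thesis using that uw by blast
  next
    case False then have "x = w" using uw e0(2) by blast
    then show ?thesis using that uw by (metis insert_commute)
  qed
  have e0M: "{x,w'} \<in> M" using e0(1) w'(1) by simp
  have uniq: "y = w'" if "{x,y} \<in> M" for y
  proof (rule ccontr)
    assume yw: "y \<noteq> w'"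
    have "{x,y} \<noteq> {x,w'}"
    proof
      assume eq: "{x,y} = {x,w'}"
      have "w' \<in> {x,y}" unfolding eq by simp
      then show False using yw w'(2) by simp
    qed
    then have "{x,y} \<inter> {x,w'} = {}" using Mdisj[rule_format, OF that e0M] by simp
    then show False by simp
  qed
  have "mate M x = w'" unfolding mate_def
  proof (rule the_equality)
    show "{x,w'} \<in> M" by (rule e0M)
  next
    fix y assume "{x,y} \<in> M" then show "y = w'" by (rule uniq)
  qed
  moreover have "\<not> inS s w'"
  proof
    assume "inS s w'"
    moreover have "{w',x} \<in> M" using e0M by (simp add: insert_commute)
    ultimately show False using IS nx unfolding I_S_def by blast
  qed
  ultimately show ?thesis using e0(1) w' by simp
qed


lemma anc_first:
  assumes "anc s a c" "a \<noteq> c" "par s a = Some p" shows "anc s p c"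
proof -
  have "(a, c) \<in> {(a, c). par s a = Some c}\<^sup>*" using assms(1) unfolding anc_def .
  then show ?thesis
  proof (cases rule: converse_rtranclE)
    case base then show ?thesis using assms(2) by simp
  next
    case (step q)
    then have "q = p" using assms(3) by auto
    then show ?thesis using step unfolding anc_def by simp
  qed
qed

lemma verts_inS: "n \<in> nodes s \<Longrightarrow> u \<in> verts n \<Longrightarrow> inS s u"
  by (cases n) (auto simp: verts_def inS_def evens_def odds_def blossoms_def)

lemma match_uniq:
  assumes gm: "graph_matching V E M" and "{a,b} \<in> M" "{a,c} \<in> M" shows "b = c"
proof -
  have Esub: "E \<subseteq> {{u, v} | u v. u \<noteq> v \<and> u \<in> V \<and> v \<in> V}" and MsubE: "M \<subseteq> E"
    and Mdisj: "\<forall>e1\<in>M. \<forall>e2\<in>M. e1 \<noteq> e2 \<longrightarrow> e1 \<inter> e2 = {}"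
    using gm unfolding graph_matching_def by auto
  have ab: "a \<noteq> b"
  proof
    assume "a = b"
    then have "{a} \<in> E" using assms(2) MsubE by auto
    then have "{a} \<in> {{u, v} | u v. u \<noteq> v \<and> u \<in> V \<and> v \<in> V}" using Esub by blast
    then obtain u v where "{a} = {u,v}" "u \<noteq> v" by blast
    moreover have "u \<in> {u,v}" "v \<in> {u,v}" by simp_all
    ultimately show False by (metis singletonD)
  qed
  have "{a,b} = {a,c}"
  proof (rule ccontr)
    assume "{a,b} \<noteq> {a,c}"
    then have "{a,b} \<inter> {a,c} = {}" using Mdisj[rule_format, OF assms(2) assms(3)] by simp
    then show False by simp
  qed
  then have "b \<in> {a,c}" by (metis insertCI)
  then show ?thesis using ab by simp
qed

lemma grow_unfold:
  assumes "grow_step E M s s'"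
  obtains v x b where "stage s = Growth" "even (delta s)" "Bn b \<in> nodes s" "v \<in> b"
    "lcp s v + 2 = int (delta s)" "{v, x} \<in> E" "\<not> inS s x"
    "s' = s \<lparr> nodes := nodes s \<union> {On x, Bn {mate M x}},
               par := (par s)(On x := Some (Bn b), Bn {mate M x} := Some (On x)),
               base := (base s)({mate M x} := mate M x),
               lcp := (lcp s)(mate M x := int (delta s)),
               lcpo := (lcpo s)(x := int (delta s) - 1) \<rparr>"
  using assms unfolding grow_step_def by blast

lemma grow_good:
  assumes gm: "graph_matching V E M" and G: "good V E M s ins" and st: "grow_step E M s s'"
  shows "\<exists>ins'. good V E M s' ins'" "evens s \<subseteq> evens s'" "\<forall>u\<in>evens s. lcp s' u = lcp s u"
proof -
  obtain v x b where stg: "stage s = Growth" and ev: "even (delta s)" and bN: "Bn b \<in> nodes s" and vb: "v \<in> b"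
    and lv: "lcp s v + 2 = int (delta s)" and vx: "{v, x} \<in> E" and nx: "\<not> inS s x"
    and s': "s' = s \<lparr> nodes := nodes s \<union> {On x, Bn {mate M x}},
               par := (par s)(On x := Some (Bn b), Bn {mate M x} := Some (On x)),
               base := (base s)({mate M x} := mate M x),
               lcp := (lcp s)(mate M x := int (delta s)),
               lcpo := (lcpo s)(x := int (delta s) - 1) \<rparr>"
    using st by (rule grow_unfold)
  define m where "m = mate M x"
  define d where "d = int (delta s)"
  have GP: "I_par s" and GR: "I_rank s" and GD: "I_disj s" and GS: "I_S V M s" and GN: "I_num s ins"
    and GA: "I_anc s ins" and GE: "I_edge E s ins" using G unfolding good_def by auto
  have mf: "{x,m} \<in> M" "m \<noteq> x" "\<not> inS s m" using mate_facts[OF gm GS vx nx] unfolding m_def by auto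
  have nod': "nodes s' = nodes s \<union> {On x, Bn {m}}" using s' m_def by simp
  have par': "par s' = (par s)(On x := Some (Bn b), Bn {m} := Some (On x))" using s' m_def by simp
  have lcp': "lcp s' = (lcp s)(m := d)" using s' m_def d_def by simp
  have lcpo': "lcpo s' = (lcpo s)(x := d - 1)" using s' d_def by simp
  have del': "delta s' = delta s" and stg': "stage s' = stage s" using s' by simp_all
  have xnO: "On x \<notin> nodes s" using nx unfolding inS_def odds_def by simp
  have mnB: "Bn {m} \<notin> nodes s" using mf(3) unfolding inS_def evens_def blossoms_def by auto
  have bl': "blossoms s' = insert {m} (blossoms s)" unfolding blossoms_def nod' by auto
  have ev': "evens s' = insert m (evens s)" unfolding evens_def bl' by simp
  have od': "odds s' = insert x (odds s)" unfolding odds_def nod' by auto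
  have inS': "inS s' u \<longleftrightarrow> inS s u \<or> u = x \<or> u = m" for u unfolding inS_def ev' od' by auto
  have xnE: "x \<notin> evens s" and xnOd: "x \<notin> odds s" and mnE: "m \<notin> evens s" and mnOd: "m \<notin> odds s"
    using nx mf(3) unfolding inS_def by auto
  have anc_old: "anc s n k" if "n \<in> nodes s" "anc s' n k" for n k
    using that(2) unfolding anc_def
  proof (induction rule: rtrancl_induct)
    case base then show ?case by simp
  next
    case (step y z)
    have "y \<in> nodes s" using anc_nodes[OF GP _ that(1)] step.IH unfolding anc_def by simp
    then have "y \<noteq> On x" "y \<noteq> Bn {m}" using xnO mnB by auto
    then have "par s y = Some z" using step.hyps(2) par' by simp
    then show ?case using step.IH by (auto intro: rtrancl_into_rtrancl)
  qed
  define ins' where "ins' = ins(x := d, m := d)"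
  have ins'_old: "ins' u = ins u" if "inS s u" for u using that nx mf(3) unfolding ins'_def by auto
  have lvd: "lcp s v = d - 2" using lv d_def by simp
  have vE: "v \<in> evens s" using bN vb unfolding evens_def blossoms_def by auto
  have below: "ins' z < d" if "anc s' (On x) (On z)" "On x \<noteq> On z" for z
  proof -
    have "par s' (On x) = Some (Bn b)" using par' by simp
    then have "anc s' (Bn b) (On z)" using anc_first that by blast
    then have a: "anc s (Bn b) (On z)" using anc_old bN by blast
    then have "On z \<in> nodes s" using anc_nodes[OF GP a bN] by simp
    then have zS: "inS s z" unfolding inS_def odds_def by simp
    have "ins z \<le> ins v" using GA a bN vb unfolding I_anc_def verts_def by auto
    moreover have "ins v \<le> lcp s v" using GN vE unfolding I_num_def by auto
    ultimately show ?thesis using lvd ins'_old[OF zS] by simp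
  qed
  have "I_par s'"
    unfolding I_par_def
  proof (intro allI impI)
    fix n p assume h: "par s' n = Some p"
    show "n \<in> nodes s' \<and> p \<in> nodes s'"
    proof (cases "n = Bn {m}")
      case True then show ?thesis using h par' nod' by auto
    next
      case F1: False
      show ?thesis
      proof (cases "n = On x")
        case True then show ?thesis using h par' nod' bN F1 by auto
      next
        case False
        then have "par s n = Some p" using h par' F1 by simp
        then show ?thesis using GP nod' unfolding I_par_def by auto
      qed
    qed
  qed
  moreover have "I_rank s'"
  proof -
    obtain rk :: "'a node \<Rightarrow> nat" where rk: "\<forall>n p. par s n = Some p \<longrightarrow> rk p < rk n"
      using GR unfolding I_rank_def by blast
    define rk' where "rk' = rk(On x := rk (Bn b) + 1, Bn {m} := rk (Bn b) + 2)"
    have "par s' n = Some p \<longrightarrow> rk' p < rk' n" for n p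
    proof (cases "n = Bn {m}")
      case True then show ?thesis using par' unfolding rk'_def by auto
    next
      case F1: False
      show ?thesis
      proof (cases "n = On x")
        case True then show ?thesis using par' F1 bN xnO mnB unfolding rk'_def by auto
      next
        case False
        show ?thesis
        proof
          assume "par s' n = Some p"
          then have h: "par s n = Some p" using par' F1 False by simp
          then have "n \<in> nodes s" "p \<in> nodes s" using GP unfolding I_par_def by auto
          then show "rk' p < rk' n" using rk h xnO mnB unfolding rk'_def by auto
        qed
      qed
    qed
    then show ?thesis unfolding I_rank_def by blast
  qed
  moreover have "I_disj s'"
  proof -
    have D: "\<forall>b1\<in>blossoms s. \<forall>b2\<in>blossoms s. b1 \<noteq> b2 \<longrightarrow> b1 \<inter> b2 = {}"
      and NE: "\<forall>b\<in>blossoms s. b \<noteq> {}" and EO: "evens s \<inter> odds s = {}"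
      using GD unfolding I_disj_def by auto
    have mb: "m \<notin> c" if "c \<in> blossoms s" for c using mnE that unfolding evens_def by auto
    have "\<forall>b1\<in>blossoms s'. \<forall>b2\<in>blossoms s'. b1 \<noteq> b2 \<longrightarrow> b1 \<inter> b2 = {}"
      unfolding bl' using D mb by blast
    moreover have "\<forall>b\<in>blossoms s'. b \<noteq> {}" unfolding bl' using NE by simp
    moreover have "evens s' \<inter> odds s' = {}" unfolding ev' od' using EO mf(2) xnE mnOd by auto
    ultimately show ?thesis unfolding I_disj_def by simp
  qed
  moreover have "I_S V M s'"
  proof -
    have "\<forall>v. free_vertex V M v \<longrightarrow> inS s v" using GS unfolding I_S_def by simp
    then have "\<forall>v. free_vertex V M v \<longrightarrow> inS s' v" by (simp add: inS')
    moreover have "inS s' w" if hu: "inS s' u" and hw: "{u,w} \<in> M" for u w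
    proof -
      consider "inS s u" | "u = x" | "u = m" using hu unfolding inS' by blast
      then show ?thesis
      proof cases
        case 1
        have MC: "\<forall>u w. inS s u \<longrightarrow> {u,w} \<in> M \<longrightarrow> inS s w" using GS unfolding I_S_def by simp
        have "inS s w" using MC 1 hw by blast
        then show ?thesis by (simp add: inS')
      next
        case 2 then have "w = m" using match_uniq[OF gm _ mf(1), of w] hw by simp
        then show ?thesis using inS' by simp
      next
        case 3 then have "{m,x} \<in> M" using mf(1) by (simp add: insert_commute)
        then have "w = x" using match_uniq[OF gm _ \<open>{m,x} \<in> M\<close>, of w] hw 3 by simp
        then show ?thesis using inS' by simp
      qed
    qed
    ultimately show ?thesis unfolding I_S_def by blast
  qed
  moreover have "I_num s' ins'"
  proof -
    have N1: "\<forall>z\<in>odds s. ins z = lcpo s z + 1 \<and> odd (lcpo s z)"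
      and N2: "\<forall>y\<in>evens s. ins y \<le> lcp s y \<and> even (lcp s y)"
      and N3: "\<forall>u. inS s u \<longrightarrow> ins u \<le> int (delta s)" using GN unfolding I_num_def by auto
    have "ins' z = lcpo s' z + 1 \<and> odd (lcpo s' z)" if "z \<in> odds s'" for z
    proof (cases "z = x")
      case True
      have "odd (d - 1)" using ev unfolding d_def by simp
      moreover have "ins' x = d" unfolding ins'_def using mf(2) by simp
      ultimately show ?thesis using True unfolding lcpo' by simp
    next
      case False
      then have "z \<in> odds s" using that od' by simp
      then show ?thesis using N1 False ins'_old[of z] lcpo' unfolding inS_def by auto
    qed
    moreover have "ins' y \<le> lcp s' y \<and> even (lcp s' y)" if "y \<in> evens s'" for y
    proof (cases "y = m")
      case True
      have "even d" using ev unfolding d_def by simp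
      moreover have "ins' m = d" unfolding ins'_def by simp
      ultimately show ?thesis using True unfolding lcp' by simp
    next
      case False
      then have "y \<in> evens s" using that ev' by simp
      then show ?thesis using N2 False ins'_old[of y] lcp' unfolding inS_def by auto
    qed
    moreover have "ins' u \<le> int (delta s')" if "inS s' u" for u
    proof (cases "inS s u")
      case True then show ?thesis using N3 ins'_old del' by simp
    next
      case False then have "u = x \<or> u = m" using that inS' by simp
      then show ?thesis unfolding ins'_def d_def del' by auto
    qed
    ultimately show ?thesis unfolding I_num_def by blast
  qed
  moreover have "I_anc s' ins'"
    unfolding I_anc_def
  proof (intro allI impI)
    fix n z u assume nN: "n \<in> nodes s'" and a: "anc s' n (On z)" and nz: "n \<noteq> On z" and u: "u \<in> verts n"
    show "ins' z \<le> ins' u \<and> (ins' z = ins' u \<longrightarrow> u \<in> evens s' \<and> lcp s' u = ins' u)"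
    proof (cases "n \<in> nodes s")
      case True
      have ao: "anc s n (On z)" using anc_old True a by blast
      then have "On z \<in> nodes s" using anc_nodes[OF GP ao True] by simp
      then have zS: "inS s z" unfolding inS_def odds_def by simp
      have uS: "inS s u" by (rule verts_inS[OF True u])
      have "ins z \<le> ins u \<and> (ins z = ins u \<longrightarrow> u \<in> evens s \<and> lcp s u = ins u)"
        using GA True ao nz u unfolding I_anc_def by blast
      moreover have "u \<noteq> m" using uS mf(3) by auto
      ultimately show ?thesis using ins'_old[OF zS] ins'_old[OF uS] ev' lcp' by auto
    next
      case False
      then have "n = On x \<or> n = Bn {m}" using nN nod' by auto
      then show ?thesis
      proof
        assume nx': "n = On x"
        then have "u = x" using u unfolding verts_def by simp
        then show ?thesis using below a nz nx' unfolding ins'_def using mf(2) by fastforce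
      next
        assume nm: "n = Bn {m}"
        then have um: "u = m" using u unfolding verts_def by simp
        have "par s' n = Some (On x)" using par' nm by simp
        then have "anc s' (On x) (On z)" using anc_first a nz by blast
        then show ?thesis
        proof (cases "On x = On z")
          case True then have "z = x" by simp
          then show ?thesis using um ev' lcp' unfolding ins'_def d_def using mf(2) by auto
        next
          case False
          then have "ins' z < d" using below \<open>anc s' (On x) (On z)\<close> by blast
          moreover have "ins' u = d" using um unfolding ins'_def by simp
          ultimately show ?thesis by simp
        qed
      qed
    qed
  qed
  moreover have "I_edge E s' ins'"
    unfolding I_edge_def
  proof (intro allI impI)
    fix y x' assume yE: "y \<in> evens s'" and e: "{y,x'} \<in> E"
      and c: "lcp s' y + 2 < int (delta s') \<or> lcp s' y + 2 = int (delta s') \<and> stage s' \<noteq> Growth"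
    have "y \<noteq> m" using c lcp' del' d_def by auto
    then have yo: "y \<in> evens s" and ly: "lcp s' y = lcp s y" using yE ev' lcp' by auto
    have "inS s x' \<and> ins x' \<le> lcp s y + 2"
      using GE yo e c ly del' stg' unfolding I_edge_def by auto
    then show "inS s' x' \<and> ins' x' \<le> lcp s' y + 2" using ins'_old inS' ly by auto
  qed
  ultimately show "\<exists>ins'. good V E M s' ins'" unfolding good_def by blast
  show "evens s \<subseteq> evens s'" using ev' by auto
  show "\<forall>u\<in>evens s. lcp s' u = lcp s u" using lcp' mnE by auto
qed

lemma bridge_unfold:
  assumes "bridge_step E M s x y s'"
  obtains b P Z NB where "stage s = Bridges" "bridge_cond E M s x y"
    "is_lca s (Bn (blossom_of s x)) (Bn (blossom_of s y)) (Bn b)"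
    "P = {n. (anc s (Bn (blossom_of s x)) n \<or> anc s (Bn (blossom_of s y)) n) \<and> anc s n (Bn b)}"
    "Z = {z. On z \<in> P}" "NB = \<Union> {c. Bn c \<in> P} \<union> Z"
    "s' = s \<lparr> nodes := (nodes s - P) \<union> {Bn NB},
                    par := (\<lambda>n. if n = Bn NB then par s (Bn b)
                                 else if n \<in> P then None
                                 else (case par s n of None \<Rightarrow> None
                                       | Some p \<Rightarrow> if p \<in> P then Some (Bn NB) else Some p)),
                    base := (base s)(NB := base s b),
                    lcp := (\<lambda>v. if v \<in> Z then lcp s x + 1 + lcp s y - lcpo s v else lcp s v) \<rparr>"
  using assms unfolding bridge_step_def Let_def by blast

lemma side_bound:
  assumes G: "good V E M s ins" and yE: "y \<in> evens s" and wE: "w \<in> evens s" and e: "{w,y} \<in> E"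
    and sum: "lcp s w + lcp s y = 2 * int (delta s) - 2" and stg: "stage s \<noteq> Growth"
    and ne2: "lcp s y \<noteq> lcp s w + 2"
    and a: "anc s (Bn (blossom_of s y)) (On z)"
  shows "lcpo s z \<le> lcp s y - 1 \<and> lcpo s z \<le> lcp s w"
proof -
  have GP: "I_par s" and GD: "I_disj s" and GN: "I_num s ins"
    and GA: "I_anc s ins" and GE: "I_edge E s ins" using G unfolding good_def by auto
  have by': "blossom_of s y \<in> blossoms s" "y \<in> blossom_of s y" using blossom_of_in[OF GD yE] by auto
  then have byN: "Bn (blossom_of s y) \<in> nodes s" unfolding blossoms_def by simp
  have zN: "On z \<in> nodes s" using anc_nodes[OF GP a byN] .
  then have zO: "z \<in> odds s" unfolding odds_def by simp
  have "y \<in> verts (Bn (blossom_of s y))" using by'(2) unfolding verts_def by simp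
  then have A: "ins z \<le> ins y \<and> (ins z = ins y \<longrightarrow> y \<in> evens s \<and> lcp s y = ins y)"
    using GA byN a unfolding I_anc_def by blast
  have z1: "ins z = lcpo s z + 1" using GN zO unfolding I_num_def by blast
  have y1: "ins y \<le> lcp s y" using GN yE unfolding I_num_def by blast
  have c1: "lcpo s z \<le> lcp s y - 1" using A z1 y1 by simp
  have c2: "lcpo s z \<le> lcp s w"
  proof (cases "lcp s w \<ge> lcp s y")
    case True then show ?thesis using c1 by simp
  next
    case False
    then have "lcp s w + 2 < int (delta s) \<or> (lcp s w + 2 = int (delta s) \<and> stage s \<noteq> Growth)"
      using sum stg by auto
    then have "ins y \<le> lcp s w + 2" using GE wE e unfolding I_edge_def by blast
    moreover have "ins z \<noteq> lcp s w + 2"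
    proof
      assume h: "ins z = lcp s w + 2"
      then have "ins z = ins y" using A \<open>ins y \<le> lcp s w + 2\<close> by simp
      then have "lcp s y = ins y" using A by simp
      then show False using h \<open>ins z = ins y\<close> ne2 by simp
    qed
    ultimately show ?thesis using A z1 by simp
  qed
  show ?thesis using c1 c2 by simp
qed

lemma bridge_good:
  assumes G: "good V E M s ins" and st: "bridge_step E M s x y s'"
  shows "\<exists>ins'. good V E M s' ins'" "evens s \<subseteq> evens s'" "\<forall>u\<in>evens s. lcp s' u = lcp s u"
    "\<forall>z. z \<notin> evens s \<longrightarrow> z \<in> evens s' \<longrightarrow> lcp s y \<noteq> lcp s x + 2 \<longrightarrow> lcp s x \<noteq> lcp s y + 2 \<longrightarrow>
        lcp s' z > max (lcp s x) (lcp s y)"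
proof -
  obtain b P Z NB where stg: "stage s = Bridges" and bc: "bridge_cond E M s x y"
    and lca: "is_lca s (Bn (blossom_of s x)) (Bn (blossom_of s y)) (Bn b)"
    and P_def: "P = {n. (anc s (Bn (blossom_of s x)) n \<or> anc s (Bn (blossom_of s y)) n) \<and> anc s n (Bn b)}"
    and Z_def: "Z = {z. On z \<in> P}" and NB_def: "NB = \<Union> {c. Bn c \<in> P} \<union> Z"
    and s': "s' = s \<lparr> nodes := (nodes s - P) \<union> {Bn NB},
                    par := (\<lambda>n. if n = Bn NB then par s (Bn b)
                                 else if n \<in> P then None
                                 else (case par s n of None \<Rightarrow> None
                                       | Some p \<Rightarrow> if p \<in> P then Some (Bn NB) else Some p)),
                    base := (base s)(NB := base s b),
                    lcp := (\<lambda>v. if v \<in> Z then lcp s x + 1 + lcp s y - lcpo s v else lcp s v) \<rparr>"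
    using st by (rule bridge_unfold)
  have GP: "I_par s" and GR: "I_rank s" and GD: "I_disj s" and GS: "I_S V M s" and GN: "I_num s ins"
    and GA: "I_anc s ins" and GE: "I_edge E s ins" using G unfolding good_def by auto
  have D: "\<forall>b1\<in>blossoms s. \<forall>b2\<in>blossoms s. b1 \<noteq> b2 \<longrightarrow> b1 \<inter> b2 = {}"
    and NE: "\<forall>b\<in>blossoms s. b \<noteq> {}" and EO: "evens s \<inter> odds s = {}"
    using GD unfolding I_disj_def by auto
  have N1: "\<forall>z\<in>odds s. ins z = lcpo s z + 1 \<and> odd (lcpo s z)"
    and N2: "\<forall>y\<in>evens s. ins y \<le> lcp s y \<and> even (lcp s y)"
    and N3: "\<forall>u. inS s u \<longrightarrow> ins u \<le> int (delta s)" using GN unfolding I_num_def by auto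
  have xE: "x \<in> evens s" and yE: "y \<in> evens s" and exy: "{x,y} \<in> E"
    and sum: "lcp s x + lcp s y = 2 * int (delta s) - 2"
    using bc unfolding bridge_cond_def by auto
  define Bx where "Bx = Bn (blossom_of s x)"
  define By where "By = Bn (blossom_of s y)"
  have BxN: "Bx \<in> nodes s" using blossom_of_in[OF GD xE] unfolding Bx_def blossoms_def by simp
  have ByN: "By \<in> nodes s" using blossom_of_in[OF GD yE] unfolding By_def blossoms_def by simp
  have lx: "anc s Bx (Bn b)" and ly: "anc s By (Bn b)" using lca unfolding is_lca_def Bx_def By_def by auto
  have Pm: "n \<in> P \<longleftrightarrow> (anc s Bx n \<or> anc s By n) \<and> anc s n (Bn b)" for n
    unfolding P_def Bx_def By_def by simp
  have PN: "n \<in> nodes s" if "n \<in> P" for n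
  proof -
    have "anc s Bx n \<or> anc s By n" using that Pm by simp
    then show ?thesis using anc_nodes[OF GP _ BxN] anc_nodes[OF GP _ ByN] by blast
  qed
  have Pb: "anc s n (Bn b)" if "n \<in> P" for n using that Pm by simp
  have bP: "Bn b \<in> P" using Pm lx anc_refl by blast
  have bN: "Bn b \<in> nodes s" using PN bP by simp
  obtain rk :: "'a node \<Rightarrow> nat" where rk: "\<forall>n p. par s n = Some p \<longrightarrow> rk p < rk n"
    using GR unfolding I_rank_def by blast
  have parb: "q \<notin> P" if "par s (Bn b) = Some q" for q
  proof
    assume "q \<in> P"
    then have "rk (Bn b) \<le> rk q" using anc_rank[OF rk] Pb by blast
    moreover have "rk q < rk (Bn b)" using rk that by blast
    ultimately show False by simp
  qed
  have Zm: "z \<in> Z \<longleftrightarrow> On z \<in> P" for z unfolding Z_def by simp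
  have ZO: "Z \<subseteq> odds s" using PN Zm unfolding odds_def by blast
  have EZ: "evens s \<inter> Z = {}" using ZO EO by blast
  have nod': "nodes s' = (nodes s - P) \<union> {Bn NB}" using s' by simp
  have lcp': "lcp s' v = (if v \<in> Z then lcp s x + 1 + lcp s y - lcpo s v else lcp s v)" for v
    using s' by simp
  have par': "par s' n = (if n = Bn NB then par s (Bn b)
                                 else if n \<in> P then None
                                 else (case par s n of None \<Rightarrow> None
                                       | Some p \<Rightarrow> if p \<in> P then Some (Bn NB) else Some p))" for n
    using s' by simp
  have lcpo': "lcpo s' = lcpo s" and del': "delta s' = delta s" and stg': "stage s' = stage s"
    using s' by simp_all
  have bl': "blossoms s' = {c. Bn c \<in> nodes s \<and> Bn c \<notin> P} \<union> {NB}"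
    unfolding blossoms_def nod' by blast
  have NBm: "v \<in> NB \<longleftrightarrow> (\<exists>c. Bn c \<in> P \<and> v \<in> c) \<or> v \<in> Z" for v unfolding NB_def by blast
  have ev': "evens s' = evens s \<union> Z"
  proof
    show "evens s' \<subseteq> evens s \<union> Z"
    proof
      fix v assume "v \<in> evens s'"
      then obtain c where c: "c \<in> blossoms s'" "v \<in> c" unfolding evens_def by blast
      show "v \<in> evens s \<union> Z"
      proof (cases "c = NB")
        case True
        then have "(\<exists>c. Bn c \<in> P \<and> v \<in> c) \<or> v \<in> Z" using c NBm by simp
        then show ?thesis using PN unfolding evens_def blossoms_def by blast
      next
        case False
        then have "Bn c \<in> nodes s" using c bl' by blast
        then show ?thesis using c unfolding evens_def blossoms_def by blast
      qed
    qed
  next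
    show "evens s \<union> Z \<subseteq> evens s'"
    proof
      fix v assume "v \<in> evens s \<union> Z"
      then consider "v \<in> Z" | c where "Bn c \<in> nodes s" "v \<in> c" unfolding evens_def blossoms_def by blast
      then show "v \<in> evens s'"
      proof cases
        case 1 then have "v \<in> NB" using NBm by simp
        then show ?thesis unfolding evens_def bl' by blast
      next
        case 2
        show ?thesis
        proof (cases "Bn c \<in> P")
          case True then have "v \<in> NB" using NBm 2 by blast
          then show ?thesis unfolding evens_def bl' by blast
        next
          case False then show ?thesis using 2 unfolding evens_def bl' by blast
        qed
      qed
    qed
  qed
  have od': "odds s' = odds s - Z" unfolding odds_def nod' Z_def by blast
  have inS': "inS s' u \<longleftrightarrow> inS s u" for u unfolding inS_def ev' od' using ZO by blast
  have NBn: "Bn NB \<notin> nodes s - P"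
  proof
    assume h: "Bn NB \<in> nodes s - P"
    then have "NB \<in> blossoms s" "b \<in> blossoms s" "NB \<noteq> b" using bN bP unfolding blossoms_def by auto
    then have "NB \<inter> b = {}" using D by blast
    moreover have "b \<subseteq> NB" using NBm bP by blast
    moreover have "b \<noteq> {}" using NE \<open>b \<in> blossoms s\<close> by blast
    ultimately show False by blast
  qed
  define f where "f n = (if n = Bn NB then Bn b else n)" for n
  have anc_new: "anc s (f n) (f k)" if "anc s' n k" for n k
    using that unfolding anc_def[of s']
  proof (induction rule: rtrancl_induct)
    case base then show ?case by (rule anc_refl)
  next
    case (step yy zz)
    then have pz: "par s' yy = Some zz" by simp
    have "anc s (f yy) (f zz)"
    proof (cases "yy = Bn NB")
      case True
      then have h: "par s (Bn b) = Some zz" using pz par' by simp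
      then have "zz \<notin> P" "zz \<in> nodes s" using parb GP unfolding I_par_def by auto
      then have "zz \<noteq> Bn NB" using NBn by blast
      then show ?thesis using True h anc_step unfolding f_def by simp
    next
      case False
      then have yP: "yy \<notin> P" using pz par' by (auto split: if_splits)
      obtain p where p: "par s yy = Some p" using pz par' False yP by (auto split: option.splits)
      show ?thesis
      proof (cases "p \<in> P")
        case True
        then have "zz = Bn NB" using pz par' False yP p by simp
        moreover have "anc s yy (Bn b)" using anc_trans[OF anc_step[OF p] Pb[OF True]] .
        ultimately show ?thesis using False unfolding f_def by simp
      next
        case F2: False
        then have "zz = p" using pz par' False yP p by simp
        moreover have "p \<in> nodes s" using GP p unfolding I_par_def by blast
        ultimately have "zz \<noteq> Bn NB" using NBn F2 by blast
        then show ?thesis using False \<open>zz = p\<close> anc_step[OF p] unfolding f_def by simp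
      qed
    qed
    then show ?case using step.IH anc_trans by blast
  qed
  have "I_par s'"
    unfolding I_par_def
  proof (intro allI impI)
    fix n p assume h: "par s' n = Some p"
    show "n \<in> nodes s' \<and> p \<in> nodes s'"
    proof (cases "n = Bn NB")
      case True
      then have h2: "par s (Bn b) = Some p" using h par' by simp
      then have "p \<notin> P" "p \<in> nodes s" using parb GP unfolding I_par_def by auto
      then show ?thesis using True nod' by simp
    next
      case False
      then have nP: "n \<notin> P" using h par' by (auto split: if_splits)
      obtain q where q: "par s n = Some q" using h par' False nP by (auto split: option.splits)
      have "n \<in> nodes s" "q \<in> nodes s" using GP q unfolding I_par_def by auto
      moreover have "p = (if q \<in> P then Bn NB else q)" using h par' False nP q by auto
      ultimately show ?thesis using nod' nP by auto
    qed
  qed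
  moreover have "I_rank s'"
  proof -
    define rk' where "rk' = rk(Bn NB := rk (Bn b))"
    have "rk' p < rk' n" if h: "par s' n = Some p" for n p
    proof (cases "n = Bn NB")
      case True
      then have h2: "par s (Bn b) = Some p" using h par' by simp
      then have "p \<notin> P" "p \<in> nodes s" using parb GP unfolding I_par_def by auto
      then have "p \<noteq> Bn NB" using NBn by blast
      then show ?thesis using True h2 rk unfolding rk'_def by simp
    next
      case False
      then have nP: "n \<notin> P" using h par' by (auto split: if_splits)
      obtain q where q: "par s n = Some q" using h par' False nP by (auto split: option.splits)
      have qlt: "rk q < rk n" using rk q by blast
      show ?thesis
      proof (cases "q \<in> P")
        case True
        then have "p = Bn NB" using h par' False nP q by simp
        moreover have "rk (Bn b) \<le> rk q" using anc_rank[OF rk] Pb[OF True] by blast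
        ultimately show ?thesis using qlt False unfolding rk'_def by simp
      next
        case F2: False
        then have "p = q" using h par' False nP q by simp
        moreover have "q \<in> nodes s" using GP q unfolding I_par_def by blast
        ultimately have "p \<noteq> Bn NB" using NBn F2 by blast
        then show ?thesis using qlt False \<open>p = q\<close> unfolding rk'_def by simp
      qed
    qed
    then show ?thesis unfolding I_rank_def by blast
  qed
  moreover have "I_disj s'"
  proof -
    have cNB: "c \<inter> NB = {}" if "Bn c \<in> nodes s" "Bn c \<notin> P" for c
    proof -
      have "c \<inter> c' = {}" if "Bn c' \<in> P" for c'
      proof -
        have "c' \<in> blossoms s" "c \<in> blossoms s" "c \<noteq> c'"
          using PN[OF that] \<open>Bn c \<in> nodes s\<close> \<open>Bn c \<notin> P\<close> that unfolding blossoms_def by auto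
        then show ?thesis using D by blast
      qed
      moreover have "c \<inter> Z = {}" using EZ \<open>Bn c \<in> nodes s\<close> unfolding evens_def blossoms_def by blast
      ultimately show ?thesis using NBm by blast
    qed
    have "\<forall>b1\<in>blossoms s'. \<forall>b2\<in>blossoms s'. b1 \<noteq> b2 \<longrightarrow> b1 \<inter> b2 = {}"
    proof (intro ballI impI)
      fix b1 b2 assume b1: "b1 \<in> blossoms s'" and b2: "b2 \<in> blossoms s'" and ne: "b1 \<noteq> b2"
      show "b1 \<inter> b2 = {}"
      proof (cases "b1 = NB")
        case True
        then have "Bn b2 \<in> nodes s" "Bn b2 \<notin> P" using b2 ne bl' by auto
        then show ?thesis using cNB True by blast
      next
        case F1: False
        then have h1: "Bn b1 \<in> nodes s" "Bn b1 \<notin> P" using b1 bl' by auto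
        show ?thesis
        proof (cases "b2 = NB")
          case True then show ?thesis using cNB h1 by blast
        next
          case False
          then have "Bn b2 \<in> nodes s" using b2 bl' by auto
          then show ?thesis using D h1 ne unfolding blossoms_def by blast
        qed
      qed
    qed
    moreover have "\<forall>c\<in>blossoms s'. c \<noteq> {}"
    proof
      fix c assume c: "c \<in> blossoms s'"
      show "c \<noteq> {}"
      proof (cases "c = NB")
        case True
        have "b \<subseteq> NB" using NBm bP by blast
        moreover have "b \<noteq> {}" using NE bN unfolding blossoms_def by blast
        ultimately show ?thesis using True by blast
      next
        case False then show ?thesis using c bl' NE unfolding blossoms_def by blast
      qed
    qed
    moreover have "evens s' \<inter> odds s' = {}" unfolding ev' od' using EO by blast
    ultimately show ?thesis unfolding I_disj_def by blast
  qed
  moreover have "I_S V M s'" using GS unfolding I_S_def inS' .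
  moreover have Zlcp: "lcp s' v = 2 * int (delta s) - 1 - lcpo s v \<and> lcpo s v + 1 = ins v \<and>
      odd (lcpo s v) \<and> ins v \<le> int (delta s)" if "v \<in> Z" for v
  proof -
    have "v \<in> odds s" using that ZO by blast
    then have "ins v = lcpo s v + 1 \<and> odd (lcpo s v)" "inS s v" using N1 unfolding inS_def by auto
    then show ?thesis using N3 lcp' that sum by auto
  qed
  moreover have "I_num s' ins"
  proof -
    have "ins z = lcpo s' z + 1 \<and> odd (lcpo s' z)" if "z \<in> odds s'" for z
      using that N1 od' lcpo' by simp
    moreover have "ins v \<le> lcp s' v \<and> even (lcp s' v)" if "v \<in> evens s'" for v
    proof (cases "v \<in> Z")
      case True
      then have h: "lcp s' v = 2 * int (delta s) - 1 - lcpo s v" "lcpo s v + 1 = ins v"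
        "odd (lcpo s v)" "ins v \<le> int (delta s)" using Zlcp by auto
      have "even (2 * int (delta s) - 1 - lcpo s v)" using h(3) by presburger
      then show ?thesis using h by simp
    next
      case False
      then have "v \<in> evens s" using that ev' by simp
      then show ?thesis using N2 lcp' False by simp
    qed
    moreover have "ins u \<le> int (delta s')" if "inS s' u" for u using N3 that inS' del' by simp
    ultimately show ?thesis unfolding I_num_def by blast
  qed
  moreover have "I_anc s' ins"
    unfolding I_anc_def
  proof (intro allI impI)
    fix n z u assume nN: "n \<in> nodes s'" and a: "anc s' n (On z)" and nz: "n \<noteq> On z" and u: "u \<in> verts n"
    have "On z \<in> nodes s'" using anc_nodes[OF \<open>I_par s'\<close> a nN] .
    then have zN: "On z \<in> nodes s" "On z \<notin> P" using nod' by auto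
    have a2: "anc s (f n) (On z)" using anc_new[OF a] unfolding f_def by simp
    obtain nn where nn: "nn \<in> nodes s" "anc s nn (On z)" "nn \<noteq> On z" "u \<in> verts nn"
    proof (cases "n = Bn NB")
      case True
      then have "u \<in> NB" using u unfolding verts_def by simp
      then have "(\<exists>c. Bn c \<in> P \<and> u \<in> c) \<or> On u \<in> P" using NBm Zm by blast
      then obtain q where q: "q \<in> P" "u \<in> verts q" unfolding verts_def by (auto split: node.splits)
      have "anc s (Bn b) (On z)" using a2 True unfolding f_def by simp
      then have "anc s q (On z)" using anc_trans Pb[OF q(1)] by blast
      moreover have "q \<noteq> On z" using q(1) zN(2) by blast
      ultimately show ?thesis using that PN[OF q(1)] q(2) by blast
    next
      case False
      then have "n \<in> nodes s" using nN nod' by auto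
      moreover have "anc s n (On z)" using a2 False unfolding f_def by simp
      ultimately show ?thesis using that nz u by blast
    qed
    then have h: "ins z \<le> ins u \<and> (ins z = ins u \<longrightarrow> u \<in> evens s \<and> lcp s u = ins u)"
      using GA unfolding I_anc_def by blast
    have "u \<in> evens s \<Longrightarrow> u \<in> evens s' \<and> lcp s' u = lcp s u" using ev' lcp' EZ by auto
    then show "ins z \<le> ins u \<and> (ins z = ins u \<longrightarrow> u \<in> evens s' \<and> lcp s' u = ins u)" using h by auto
  qed
  moreover have "I_edge E s' ins"
    unfolding I_edge_def
  proof (intro allI impI)
    fix v w assume vE: "v \<in> evens s'" and e: "{v,w} \<in> E"
      and c: "lcp s' v + 2 < int (delta s') \<or> lcp s' v + 2 = int (delta s') \<and> stage s' \<noteq> Growth"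
    have "v \<notin> Z"
    proof
      assume "v \<in> Z"
      then have "lcp s' v = 2 * int (delta s) - 1 - lcpo s v" "lcpo s v + 1 \<le> int (delta s)"
        using Zlcp by auto
      then show False using c del' by simp
    qed
    then have "v \<in> evens s" "lcp s' v = lcp s v" using vE ev' lcp' by auto
    then have "inS s w \<and> ins w \<le> lcp s v + 2" using GE e c del' stg' unfolding I_edge_def by auto
    then show "inS s' w \<and> ins w \<le> lcp s' v + 2" using inS' \<open>lcp s' v = lcp s v\<close> by simp
  qed
  ultimately show "\<exists>ins'. good V E M s' ins'" unfolding good_def by blast
  show "evens s \<subseteq> evens s'" using ev' by blast
  show "\<forall>u\<in>evens s. lcp s' u = lcp s u" using lcp' EZ by auto
  show "\<forall>z. z \<notin> evens s \<longrightarrow> z \<in> evens s' \<longrightarrow> lcp s y \<noteq> lcp s x + 2 \<longrightarrow> lcp s x \<noteq> lcp s y + 2 \<longrightarrow>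
        lcp s' z > max (lcp s x) (lcp s y)"
  proof (intro allI impI)
    fix z assume zn: "z \<notin> evens s" and zE: "z \<in> evens s'" and n1: "lcp s y \<noteq> lcp s x + 2"
      and n2: "lcp s x \<noteq> lcp s y + 2"
    have zZ: "z \<in> Z" using zn zE ev' by simp
    then have zP: "On z \<in> P" using Zm by simp
    have lz: "lcp s' z = lcp s x + 1 + lcp s y - lcpo s z" using lcp' zZ by simp
    have stg2: "stage s \<noteq> Growth" using stg by simp
    have "anc s Bx (On z) \<or> anc s By (On z)" using zP Pm by simp
    then show "lcp s' z > max (lcp s x) (lcp s y)"
    proof
      assume "anc s Bx (On z)"
      then have "lcpo s z \<le> lcp s x - 1 \<and> lcpo s z \<le> lcp s y"
        using side_bound[OF G xE yE _ _ stg2 n2] exy sum unfolding Bx_def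
        by (simp add: insert_commute add.commute)
      then show ?thesis using lz by simp
    next
      assume "anc s By (On z)"
      then have "lcpo s z \<le> lcp s y - 1 \<and> lcpo s z \<le> lcp s x"
        using side_bound[OF G yE xE exy sum stg2 n1] unfolding By_def by simp
      then show ?thesis using lz by simp
    qed
  qed
qed

lemma same_struct:
  assumes "nodes s' = nodes s" "par s' = par s" "lcp s' = lcp s" "lcpo s' = lcpo s"
  shows "blossoms s' = blossoms s" "evens s' = evens s" "odds s' = odds s" "inS s' = inS s" "anc s' = anc s"
    "I_par s' = I_par s" "I_rank s' = I_rank s" "I_disj s' = I_disj s" "I_S V M s' = I_S V M s"
    "I_anc s' ins = I_anc s ins"
proof -
  show b: "blossoms s' = blossoms s" unfolding blossoms_def using assms(1) by simp
  show e: "evens s' = evens s" unfolding evens_def using b by simp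
  show o: "odds s' = odds s" unfolding odds_def using assms(1) by simp
  show i: "inS s' = inS s" unfolding inS_def[abs_def] using e o by simp
  show a: "anc s' = anc s" unfolding anc_def[abs_def] using assms(2) by simp
  show "I_par s' = I_par s" unfolding I_par_def using assms(1,2) by simp
  show "I_rank s' = I_rank s" unfolding I_rank_def using assms(2) by simp
  show "I_disj s' = I_disj s" unfolding I_disj_def using b e o by simp
  show "I_S V M s' = I_S V M s" unfolding I_S_def using i by simp
  show "I_anc s' ins = I_anc s ins" unfolding I_anc_def using a e assms(1,3) by simp
qed

lemma simple_good:
  assumes G: "good V E M s ins"
    and st: "end_growth E s s' \<or> stop_step E M s x y s' \<or> end_phase E M s s'"
  shows "good V E M s' ins \<and> evens s' = evens s \<and> lcp s' = lcp s"
proof -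
  have ss: "nodes s' = nodes s" "par s' = par s" "lcp s' = lcp s" "lcpo s' = lcpo s"
    and dl: "delta s \<le> delta s'"
    using st unfolding end_growth_def stop_step_def end_phase_def by auto
  note S = same_struct[OF ss]
  have GN: "I_num s ins" and GE: "I_edge E s ins" using G unfolding good_def by auto
  have N2: "\<forall>y\<in>evens s. ins y \<le> lcp s y \<and> even (lcp s y)"
    and N3: "\<forall>u. inS s u \<longrightarrow> ins u \<le> int (delta s)" using GN unfolding I_num_def by auto
  have "I_num s' ins" using GN dl unfolding I_num_def S ss(3,4) by force
  moreover have "I_edge E s' ins"
    unfolding I_edge_def S ss(3)
  proof (intro allI impI)
    fix yy w assume yE: "yy \<in> evens s" and e: "{yy,w} \<in> E"
      and c: "lcp s yy + 2 < int (delta s') \<or> lcp s yy + 2 = int (delta s') \<and> stage s' \<noteq> Growth"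
    consider (eg) "end_growth E s s'" | (sp) "stop_step E M s x y s'" | (ep) "end_phase E M s s'" using st by blast
    then show "inS s w \<and> ins w \<le> lcp s yy + 2"
    proof cases
      case eg
      then have h: "stage s = Growth" "odd (delta s) \<or> \<not> growth_possible E s" "delta s' = delta s"
        unfolding end_growth_def by auto
      show ?thesis
      proof (cases "lcp s yy + 2 < int (delta s)")
        case True then show ?thesis using GE yE e unfolding I_edge_def by blast
      next
        case False
        then have eq: "lcp s yy + 2 = int (delta s)" using c h(3) by auto
        have "even (lcp s yy)" using N2 yE by blast
        then have "even (delta s)" using eq by presburger
        then have ng: "\<not> growth_possible E s" using h(2) by simp
        obtain bb where "bb \<in> blossoms s" "yy \<in> bb" using yE unfolding evens_def by blast
        then have "inS s w" using ng eq e unfolding growth_possible_def blossoms_def by blast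
        then show ?thesis using N3 eq by auto
      qed
    next
      case sp
      then have "stage s = Bridges" "delta s' = delta s" unfolding stop_step_def by auto
      then show ?thesis using GE yE e c unfolding I_edge_def by auto
    next
      case ep
      then have "stage s = Bridges" "delta s' = Suc (delta s)" "stage s' = Growth" unfolding end_phase_def by auto
      then have "lcp s yy + 2 < int (delta s) \<or> lcp s yy + 2 = int (delta s) \<and> stage s \<noteq> Growth"
        using c by auto
      then show ?thesis using GE yE e unfolding I_edge_def by blast
    qed
  qed
  ultimately have "good V E M s' ins" using G unfolding good_def S by blast
  then show ?thesis using S ss by simp
qed

lemma init_good:
  shows "good V E M (init_st V M) (\<lambda>_. 0)"
proof -
  let ?s = "init_st V M"
  have nod: "nodes ?s = {Bn {v} | v. free_vertex V M v}" and par: "par ?s = (\<lambda>_. None)"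
    and lcp: "lcp ?s = (\<lambda>_. 0)" and dl: "delta ?s = 0" unfolding init_st_def by simp_all
  have bl: "blossoms ?s = {{v} | v. free_vertex V M v}" unfolding blossoms_def nod by blast
  have ev: "evens ?s = {v. free_vertex V M v}" unfolding evens_def bl by blast
  have od: "odds ?s = {}" unfolding odds_def nod by blast
  have inS: "inS ?s u \<longleftrightarrow> free_vertex V M u" for u unfolding inS_def ev od by simp
  have anc: "anc ?s n k \<longleftrightarrow> n = k" for n k
  proof
    assume "anc ?s n k"
    then show "n = k" unfolding anc_def par by (auto elim: rtranclE)
  qed (simp add: anc_refl)
  have "I_par ?s" unfolding I_par_def par by simp
  moreover have "I_rank ?s" unfolding I_rank_def par by simp
  moreover have "I_disj ?s" unfolding I_disj_def bl od by blast
  moreover have "I_S V M ?s"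
    unfolding I_S_def inS free_vertex_def by blast
  moreover have "I_num ?s (\<lambda>_. 0)" unfolding I_num_def od ev lcp by simp
  moreover have "I_anc ?s (\<lambda>_. 0)" unfolding I_anc_def anc by simp
  moreover have "I_edge E ?s (\<lambda>_. 0)" unfolding I_edge_def lcp dl by simp
  ultimately show ?thesis unfolding good_def by blast
qed

lemma step_good:
  assumes gm: "graph_matching V E M" and G: "good V E M s ins" and st: "step E M s s'"
  shows "(\<exists>ins'. good V E M s' ins') \<and> evens s \<subseteq> evens s' \<and> (\<forall>u\<in>evens s. lcp s' u = lcp s u)"
proof -
  consider (g) "grow_step E M s s'" | (b) x y where "bridge_step E M s x y s'"
    | (o) x y where "end_growth E s s' \<or> stop_step E M s x y s' \<or> end_phase E M s s'"
    using st unfolding step_def by blast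
  then show ?thesis
  proof cases
    case g then show ?thesis using grow_good[OF gm G] by blast
  next
    case b then show ?thesis using bridge_good[OF G] by blast
  next
    case o
    then have "good V E M s' ins \<and> evens s' = evens s \<and> lcp s' = lcp s" by (rule simple_good[OF G])
    then show ?thesis by auto
  qed
qed

lemma reachable_good:
  assumes gm: "graph_matching V E M" and r: "reachable V E M s"
  shows "\<exists>ins. good V E M s ins"
  using r unfolding reachable_def
proof (induction rule: rtranclp_induct)
  case base then show ?case using init_good by blast
next
  case (step t u) then show ?case using step_good[OF gm] by blast
qed

theorem lemma5:
  fixes V :: "'a set" and E M :: "'a set set" and s s' :: "'a st" and x y z :: 'a
  assumes "graph_matching V E M"
    and "reachable V E M s"
    and "bridge_step E M s x y s'"
    and "\<bar>lcp s x - lcp s y\<bar> \<notin> {0, 2}"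
    and "z \<notin> evens s" and "z \<in> evens s'"
  shows "lcp s' z > max (lcp s x) (lcp s y) \<and>
    (\<forall>t w. (step_in_phase E M (delta s))\<^sup>*\<^sup>* s' t \<and> stage t = Bridges \<and> bridge_cond E M t z w
       \<longrightarrow> \<bar>lcp t z - lcp t w\<bar> > \<bar>lcp s x - lcp s y\<bar>)"
proof -
  obtain ins where G: "good V E M s ins" using reachable_good[OF assms(1,2)] by blast
  have n1: "lcp s y \<noteq> lcp s x + 2" and n2: "lcp s x \<noteq> lcp s y + 2" using assms(4) by auto
  have P1: "lcp s' z > max (lcp s x) (lcp s y)"
    using bridge_good(4)[OF G assms(3)] assms(5,6) n1 n2 by blast
  obtain ins' where G': "good V E M s' ins'" using bridge_good(1)[OF G assms(3)] by blast
  have sum: "lcp s x + lcp s y = 2 * int (delta s) - 2"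
    using assms(3) unfolding bridge_step_def bridge_cond_def by auto
  have ds': "delta s' = delta s"
    using assms(3) unfolding bridge_step_def Let_def by auto
  have P2: "\<bar>lcp t z - lcp t w\<bar> > \<bar>lcp s x - lcp s y\<bar>"
    if rt: "(step_in_phase E M (delta s))\<^sup>*\<^sup>* s' t" and bc: "bridge_cond E M t z w" for t w
  proof -
    have "(\<exists>ins. good V E M t ins) \<and> z \<in> evens t \<and> lcp t z = lcp s' z \<and> delta t = delta s"
      using rt
    proof (induction rule: rtranclp_induct)
      case base then show ?case using G' assms(6) ds' by blast
    next
      case (step t1 t2)
      then obtain i1 where "good V E M t1 i1" by blast
      then have "(\<exists>ins'. good V E M t2 ins') \<and> evens t1 \<subseteq> evens t2 \<and> (\<forall>u\<in>evens t1. lcp t2 u = lcp t1 u)"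
        using step_good[OF assms(1)] step.hyps(2) unfolding step_in_phase_def by blast
      moreover have "delta t2 = delta s" using step.hyps(2) unfolding step_in_phase_def by blast
      ultimately show ?case using step.IH by auto
    qed
    then have h: "lcp t z = lcp s' z" "delta t = delta s" by auto
    have "lcp t z + lcp t w = 2 * int (delta s) - 2" using bc h(2) unfolding bridge_cond_def by auto
    then show ?thesis using h(1) P1 sum by (simp add: abs_if max_def split: if_splits)
  qed
  show ?thesis using P1 P2 by blast
qed

end
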